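(* Let $n > d \geq 1$, let $\mathbf{U} \in \mathbb{R}^{n\times d}$ have orthonormal columns, and let $\varsigma^2 > 0$. Let $Q$ be the distribution of $\mathbf{y} = \mathbf{U}\mathbf{c} + \mathbf{z}$, where $\mathbf{c}\sim\mathcal{N}(0,\mathbf{I}_d)$ and $\mathbf{z}\sim\mathcal{N}(0,\varsigma^2\mathbf{I}_n)$ are independent. For $\alpha\in[0,1]$ define the self-supervised loss $$L_{SS}(\alpha,\mathbf{U},\mathbf{y}) = \|\mathbf{y} - \alpha\mathbf{U}\mathbf{U}^T\mathbf{y}\|_2^2 + \frac{2\alpha d}{n-d}\,\|(\mathbf{I}_n - \mathbf{U}\mathbf{U}^T)\mathbf{y}\|_2^2.$$ Then, for fixed $\mathbf{U}$, the expectation $\mathbb{E}_Q[L_{SS}(\alpha,\mathbf{U},\mathbf{y})]$ is minimized over $\alpha$ by $\alpha = \frac{1}{1+\varsigma^2}$.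
   Context: $\mathbf{I}_n$ denotes the $n\times n$ identity matrix; the expectation is over $\mathbf{y}\sim Q$. *)

theory Defs
  imports "HOL-Probability.Probability"
begin

definition gauss_vec :: "real \<Rightarrow> ('k::finite \<Rightarrow> real) measure" where
  "gauss_vec \<sigma> = PiM UNIV (\<lambda>_. density lborel (normal_density 0 \<sigma>))"

definition Q_dist :: "real^'d::finite^'n::finite \<Rightarrow> real \<Rightarrow> (real^'n) measure" where
  "Q_dist U s2 =
     distr ((gauss_vec 1 :: ('d \<Rightarrow> real) measure) \<Otimes>\<^sub>M (gauss_vec (sqrt s2) :: ('n \<Rightarrow> real) measure))
       borel (\<lambda>(c, z). U *v (\<chi> i. c i) + (\<chi> i. z i))"

definition L_SS :: "real \<Rightarrow> real^'d::finite^'n::finite \<Rightarrow> real^'n \<Rightarrow> real" where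
  "L_SS \<alpha> U y =
     (norm (y - \<alpha> *\<^sub>R ((U ** transpose U) *v y)))\<^sup>2
     + (2 * \<alpha> * real CARD('d) / (real CARD('n) - real CARD('d)))
       * (norm ((mat 1 - U ** transpose U) *v y))\<^sup>2"

end

theory Submission
  imports Defs
begin

abbreviation N1 :: "real \<Rightarrow> real measure" where "N1 \<sigma> \<equiv> density lborel (normal_density 0 \<sigma>)"

lemma N1_prob: "\<sigma> > 0 \<Longrightarrow> prob_space (N1 \<sigma>)"
  by (rule prob_space_normal_density)

lemma N1_lin: assumes "\<sigma> > 0" shows "integrable (N1 \<sigma>) (\<lambda>x. x)" "integral\<^sup>L (N1 \<sigma>) (\<lambda>x. x) = 0"
proof -
  have h: "has_bochner_integral lborel (\<lambda>x. normal_density 0 \<sigma> x * x) 0"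
    using normal_moment_nz_1[OF assms, of 0] .
  show "integrable (N1 \<sigma>) (\<lambda>x. x)"
    using h by (subst integrable_density) (auto simp: has_bochner_integral_iff)
  show "integral\<^sup>L (N1 \<sigma>) (\<lambda>x. x) = 0"
    using h by (subst integral_density) (auto simp: has_bochner_integral_iff)
qed

lemma N1_sq: assumes "\<sigma> > 0" shows "integrable (N1 \<sigma>) (\<lambda>x. x * x)" "integral\<^sup>L (N1 \<sigma>) (\<lambda>x. x * x) = \<sigma>\<^sup>2"
proof -
  have h0: "has_bochner_integral lborel (\<lambda>x. normal_density 0 \<sigma> x * (x - 0) ^ (2 * 1)) (fact (2 * 1) / ((2 / \<sigma>\<^sup>2)^1 * fact 1))"
    using normal_moment_even[OF assms, where k=1 and \<mu>=0] .
  have h: "has_bochner_integral lborel (\<lambda>x. normal_density 0 \<sigma> x * (x * x)) (\<sigma>\<^sup>2)"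
    using h0 assms by (simp add: power2_eq_square)
  show "integrable (N1 \<sigma>) (\<lambda>x. x * x)"
    using h by (subst integrable_density) (auto simp: has_bochner_integral_iff)
  show "integral\<^sup>L (N1 \<sigma>) (\<lambda>x. x * x) = \<sigma>\<^sup>2"
    using h by (subst integral_density) (auto simp: has_bochner_integral_iff)
qed


lemma gv_prob: "\<sigma> > 0 \<Longrightarrow> prob_space (gauss_vec \<sigma> :: ('k::finite \<Rightarrow> real) measure)"
  unfolding gauss_vec_def by (intro prob_space_PiM N1_prob)

lemma gv_prod:
  fixes f :: "'k::finite \<Rightarrow> real \<Rightarrow> real"
  assumes "\<sigma> > 0" and "\<And>i. integrable (N1 \<sigma>) (f i)"
  shows "integrable (gauss_vec \<sigma> :: ('k::finite \<Rightarrow> real) measure) (\<lambda>x. \<Prod>i\<in>UNIV. f i (x i))"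
    "integral\<^sup>L (gauss_vec \<sigma> :: ('k::finite \<Rightarrow> real) measure) (\<lambda>x. \<Prod>i\<in>UNIV. f i (x i)) = (\<Prod>i\<in>UNIV. integral\<^sup>L (N1 \<sigma>) (f i))"
proof -
  interpret product_prob_space "\<lambda>_::'k. N1 \<sigma>" UNIV
    by (intro product_prob_spaceI N1_prob assms)
  show "integrable (gauss_vec \<sigma> :: ('k::finite \<Rightarrow> real) measure) (\<lambda>x. \<Prod>i\<in>UNIV. f i (x i))"
    unfolding gauss_vec_def using product_integrable_prod[of UNIV f] assms(2) by simp
  show "integral\<^sup>L (gauss_vec \<sigma> :: ('k::finite \<Rightarrow> real) measure) (\<lambda>x. \<Prod>i\<in>UNIV. f i (x i)) = (\<Prod>i\<in>UNIV. integral\<^sup>L (N1 \<sigma>) (f i))"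
    unfolding gauss_vec_def using product_integral_prod[of UNIV f] assms(2) by simp
qed

lemma gv_lin:
  assumes "\<sigma> > 0"
  shows "integrable (gauss_vec \<sigma> :: ('k::finite \<Rightarrow> real) measure) (\<lambda>x. x a)"
    "integral\<^sup>L (gauss_vec \<sigma> :: ('k::finite \<Rightarrow> real) measure) (\<lambda>x. x a) = 0"
proof -
  let ?f = "\<lambda>i t. if i = a then t else (1::real)"
  interpret N: prob_space "N1 \<sigma>" using N1_prob[OF assms] .
  have fi: "integrable (N1 \<sigma>) (?f i)" for i
    by (cases "i = a") (simp_all add: N1_lin[OF assms])
  have eq: "\<And>x. (\<Prod>i\<in>UNIV. ?f i (x i)) = x a" by (simp add: prod.delta)
  show "integrable (gauss_vec \<sigma> :: ('k::finite \<Rightarrow> real) measure) (\<lambda>x. x a)"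
    using gv_prod(1)[where f="?f", OF assms fi] unfolding eq .
  have "integral\<^sup>L (gauss_vec \<sigma> :: ('k::finite \<Rightarrow> real) measure) (\<lambda>x. x a) = (\<Prod>i\<in>UNIV. integral\<^sup>L (N1 \<sigma>) (?f i))"
    using gv_prod(2)[where f="?f", OF assms fi] unfolding eq .
  also have "\<dots> = 0"
  proof -
    have "integral\<^sup>L (N1 \<sigma>) (?f a) = 0" by (simp add: N1_lin[OF assms])
    then show ?thesis by (rule prod_zero[OF finite, OF bexI[OF _ UNIV_I]])
  qed
  finally show "integral\<^sup>L (gauss_vec \<sigma> :: ('k::finite \<Rightarrow> real) measure) (\<lambda>x. x a) = 0" .
qed

lemma gv_quad:
  assumes "\<sigma> > 0"
  shows "integrable (gauss_vec \<sigma> :: ('k::finite \<Rightarrow> real) measure) (\<lambda>x. x a * x b)"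
    "integral\<^sup>L (gauss_vec \<sigma> :: ('k::finite \<Rightarrow> real) measure) (\<lambda>x. x a * x b) = (if a = b then \<sigma>\<^sup>2 else 0)"
proof -
  let ?f = "\<lambda>i t. (if i = a then t else (1::real)) * (if i = b then t else 1)"
  interpret N: prob_space "N1 \<sigma>" using N1_prob[OF assms] .
  have fi: "integrable (N1 \<sigma>) (?f i)" for i
    by (cases "i = a"; cases "i = b") (simp_all add: N1_lin[OF assms] N1_sq[OF assms])
  have eq: "\<And>x. (\<Prod>i\<in>UNIV. ?f i (x i)) = x a * x b" by (simp add: prod.distrib prod.delta)
  show "integrable (gauss_vec \<sigma> :: ('k::finite \<Rightarrow> real) measure) (\<lambda>x. x a * x b)"
    using gv_prod(1)[where f="?f", OF assms fi] unfolding eq .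
  have "integral\<^sup>L (gauss_vec \<sigma> :: ('k::finite \<Rightarrow> real) measure) (\<lambda>x. x a * x b) = (\<Prod>i\<in>UNIV. integral\<^sup>L (N1 \<sigma>) (?f i))"
    using gv_prod(2)[where f="?f", OF assms fi] unfolding eq .
  also have "\<dots> = (if a = b then \<sigma>\<^sup>2 else 0)"
  proof (cases "a = b")
    case True
    have "(\<Prod>i\<in>UNIV. integral\<^sup>L (N1 \<sigma>) (?f i)) = (\<Prod>i\<in>UNIV. if i = a then \<sigma>\<^sup>2 else 1)"
      using N.prob_space by (intro prod.cong) (auto simp: True N1_sq[OF assms])
    then show ?thesis using True by (simp add: prod.delta)
  next
    case False
    have "integral\<^sup>L (N1 \<sigma>) (?f a) = 0" by (simp add: False N1_lin[OF assms])
    then have "(\<Prod>i\<in>UNIV. integral\<^sup>L (N1 \<sigma>) (?f i)) = 0" by (rule prod_zero[OF finite, OF bexI[OF _ UNIV_I]])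
    then show ?thesis using False by simp
  qed
  finally show "integral\<^sup>L (gauss_vec \<sigma> :: ('k::finite \<Rightarrow> real) measure) (\<lambda>x. x a * x b) = (if a = b then \<sigma>\<^sup>2 else 0)" .
qed


lemma pair_prod:
  fixes f :: "'a \<Rightarrow> real" and g :: "'b \<Rightarrow> real"
  assumes P1: "prob_space M1" and P2: "prob_space M2" and I1: "integrable M1 f" and I2: "integrable M2 g"
  shows "integrable (M1 \<Otimes>\<^sub>M M2) (\<lambda>\<omega>. f (fst \<omega>) * g (snd \<omega>))"
    "integral\<^sup>L (M1 \<Otimes>\<^sub>M M2) (\<lambda>\<omega>. f (fst \<omega>) * g (snd \<omega>)) = integral\<^sup>L M1 f * integral\<^sup>L M2 g"
proof -
  interpret p1: prob_space M1 by fact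
  interpret p2: prob_space M2 by fact
  interpret pair_sigma_finite M1 M2 ..
  have [measurable]: "f \<in> borel_measurable M1" "g \<in> borel_measurable M2" using I1 I2 by auto
  have int: "integrable (M1 \<Otimes>\<^sub>M M2) (\<lambda>\<omega>. f (fst \<omega>) * g (snd \<omega>))"
  proof (rule Fubini_integrable)
    show "(\<lambda>\<omega>. f (fst \<omega>) * g (snd \<omega>)) \<in> borel_measurable (M1 \<Otimes>\<^sub>M M2)" by measurable
    have "(\<lambda>x. \<integral>y. norm (f (fst (x, y)) * g (snd (x, y))) \<partial>M2) = (\<lambda>x. \<bar>f x\<bar> * (\<integral>y. \<bar>g y\<bar> \<partial>M2))"
      by (simp add: abs_mult)
    then show "integrable M1 (\<lambda>x. \<integral>y. norm (f (fst (x, y)) * g (snd (x, y))) \<partial>M2)"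
      using I1 by (simp add: integrable_abs)
    show "AE x in M1. integrable M2 (\<lambda>y. f (fst (x, y)) * g (snd (x, y)))"
      using I2 by simp
  qed
  then show "integrable (M1 \<Otimes>\<^sub>M M2) (\<lambda>\<omega>. f (fst \<omega>) * g (snd \<omega>))" .
  have "integral\<^sup>L (M1 \<Otimes>\<^sub>M M2) (\<lambda>\<omega>. f (fst \<omega>) * g (snd \<omega>)) = (\<integral>x. \<integral>y. f (fst (x, y)) * g (snd (x, y)) \<partial>M2 \<partial>M1)"
    using integral_fst'[OF int] by simp
  also have "\<dots> = integral\<^sup>L M1 f * integral\<^sup>L M2 g" by simp
  finally show "integral\<^sup>L (M1 \<Otimes>\<^sub>M M2) (\<lambda>\<omega>. f (fst \<omega>) * g (snd \<omega>)) = integral\<^sup>L M1 f * integral\<^sup>L M2 g" .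
qed


abbreviation Om :: "real \<Rightarrow> (('d::finite \<Rightarrow> real) \<times> ('n::finite \<Rightarrow> real)) measure" where
  "Om s2 \<equiv> (gauss_vec 1 :: ('d \<Rightarrow> real) measure) \<Otimes>\<^sub>M (gauss_vec (sqrt s2) :: ('n \<Rightarrow> real) measure)"

lemma om_prob: "s2 > 0 \<Longrightarrow> prob_space (Om s2)"
  by (intro prob_space_pair gv_prob) auto

lemma om_moments:
  fixes a b :: "'d::finite" and i j :: "'n::finite"
  assumes "s2 > 0"
  shows "integrable (Om s2 :: (('d \<Rightarrow> real) \<times> ('n \<Rightarrow> real)) measure) (\<lambda>\<omega>. fst \<omega> a * fst \<omega> b)"
    "integral\<^sup>L (Om s2 :: (('d \<Rightarrow> real) \<times> ('n \<Rightarrow> real)) measure) (\<lambda>\<omega>. fst \<omega> a * fst \<omega> b) = (if a = b then 1 else 0)"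
    "integrable (Om s2 :: (('d \<Rightarrow> real) \<times> ('n \<Rightarrow> real)) measure) (\<lambda>\<omega>. snd \<omega> i * snd \<omega> j)"
    "integral\<^sup>L (Om s2 :: (('d \<Rightarrow> real) \<times> ('n \<Rightarrow> real)) measure) (\<lambda>\<omega>. snd \<omega> i * snd \<omega> j) = (if i = j then s2 else 0)"
    "integrable (Om s2 :: (('d \<Rightarrow> real) \<times> ('n \<Rightarrow> real)) measure) (\<lambda>\<omega>. fst \<omega> a * snd \<omega> j)"
    "integral\<^sup>L (Om s2 :: (('d \<Rightarrow> real) \<times> ('n \<Rightarrow> real)) measure) (\<lambda>\<omega>. fst \<omega> a * snd \<omega> j) = 0"
proof -
  have s: "sqrt s2 > 0" using assms by simp
  have P1: "prob_space (gauss_vec 1 :: ('d \<Rightarrow> real) measure)" by (rule gv_prob) simp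
  have P2: "prob_space (gauss_vec (sqrt s2) :: ('n \<Rightarrow> real) measure)" by (rule gv_prob[OF s])
  interpret p1: prob_space "gauss_vec 1 :: ('d \<Rightarrow> real) measure" by fact
  interpret p2: prob_space "gauss_vec (sqrt s2) :: ('n \<Rightarrow> real) measure" by fact
  have c1: "integrable (gauss_vec 1 :: ('d \<Rightarrow> real) measure) (\<lambda>_. 1::real)" by simp
  have c2: "integrable (gauss_vec (sqrt s2) :: ('n \<Rightarrow> real) measure) (\<lambda>_. 1::real)" by simp
  note A = pair_prod[OF P1 P2 gv_quad(1)[of 1 a b] c2, simplified]
  show "integrable (Om s2 :: (('d \<Rightarrow> real) \<times> ('n \<Rightarrow> real)) measure) (\<lambda>\<omega>. fst \<omega> a * fst \<omega> b)" using A(1) by simp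
  show "integral\<^sup>L (Om s2 :: (('d \<Rightarrow> real) \<times> ('n \<Rightarrow> real)) measure) (\<lambda>\<omega>. fst \<omega> a * fst \<omega> b) = (if a = b then 1 else 0)"
    using A(2) gv_quad(2)[of 1 a b] p2.prob_space by simp
  note B = pair_prod[OF P1 P2 c1 gv_quad(1)[OF s, of i j], simplified]
  show "integrable (Om s2 :: (('d \<Rightarrow> real) \<times> ('n \<Rightarrow> real)) measure) (\<lambda>\<omega>. snd \<omega> i * snd \<omega> j)" using B(1) by simp
  show "integral\<^sup>L (Om s2 :: (('d \<Rightarrow> real) \<times> ('n \<Rightarrow> real)) measure) (\<lambda>\<omega>. snd \<omega> i * snd \<omega> j) = (if i = j then s2 else 0)"
    using B(2) gv_quad(2)[OF s, of i j] assms p1.prob_space by simp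
  note C = pair_prod[OF P1 P2 gv_lin(1)[of 1 a] gv_lin(1)[OF s, of j], simplified]
  show "integrable (Om s2 :: (('d \<Rightarrow> real) \<times> ('n \<Rightarrow> real)) measure) (\<lambda>\<omega>. fst \<omega> a * snd \<omega> j)" using C(1) by simp
  show "integral\<^sup>L (Om s2 :: (('d \<Rightarrow> real) \<times> ('n \<Rightarrow> real)) measure) (\<lambda>\<omega>. fst \<omega> a * snd \<omega> j) = 0"
    using C(2) gv_lin(2)[of 1 a] by simp
qed


lemma core:
  fixes p :: "'d::finite \<Rightarrow> real" and q :: "'n::finite \<Rightarrow> real"
  assumes s: "s2 > 0"
  shows "integrable (Om s2 :: (('d \<Rightarrow> real) \<times> ('n \<Rightarrow> real)) measure)
           (\<lambda>\<omega>. ((\<Sum>a\<in>UNIV. p a * fst \<omega> a) + (\<Sum>j\<in>UNIV. q j * snd \<omega> j))\<^sup>2)"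
    "integral\<^sup>L (Om s2 :: (('d \<Rightarrow> real) \<times> ('n \<Rightarrow> real)) measure)
           (\<lambda>\<omega>. ((\<Sum>a\<in>UNIV. p a * fst \<omega> a) + (\<Sum>j\<in>UNIV. q j * snd \<omega> j))\<^sup>2)
       = (\<Sum>a\<in>UNIV. (p a)\<^sup>2) + s2 * (\<Sum>j\<in>UNIV. (q j)\<^sup>2)"
proof -
  let ?M = "Om s2 :: (('d \<Rightarrow> real) \<times> ('n \<Rightarrow> real)) measure"
  let ?T1 = "\<lambda>\<omega>. \<Sum>a\<in>UNIV. \<Sum>b\<in>UNIV. (p a * p b) * (fst \<omega> a * fst \<omega> b)"
  let ?T2 = "\<lambda>\<omega>. \<Sum>a\<in>UNIV. \<Sum>j\<in>UNIV. (2 * p a * q j) * (fst \<omega> a * snd \<omega> j)"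
  let ?T3 = "\<lambda>\<omega>. \<Sum>i\<in>UNIV. \<Sum>j\<in>UNIV. (q i * q j) * (snd \<omega> i * snd \<omega> j)"
  have e1: "(\<Sum>a\<in>UNIV. p a * fst \<omega> a) * (\<Sum>a\<in>UNIV. p a * fst \<omega> a) = ?T1 \<omega>" for \<omega>
    by (simp add: sum_product mult_ac)
  have e2: "2 * ((\<Sum>a\<in>UNIV. p a * fst \<omega> a) * (\<Sum>j\<in>UNIV. q j * snd \<omega> j)) = ?T2 \<omega>" for \<omega>
    by (simp add: sum_product sum_distrib_left mult_ac) (rule sum.swap)
  have e3: "(\<Sum>j\<in>UNIV. q j * snd \<omega> j) * (\<Sum>j\<in>UNIV. q j * snd \<omega> j) = ?T3 \<omega>" for \<omega>
    by (simp add: sum_product mult_ac)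
  have eq: "((\<Sum>a\<in>UNIV. p a * fst \<omega> a) + (\<Sum>j\<in>UNIV. q j * snd \<omega> j))\<^sup>2 = ?T1 \<omega> + ?T2 \<omega> + ?T3 \<omega>" for \<omega>
    unfolding e1[symmetric] e2[symmetric] e3[symmetric] by (simp add: power2_eq_square algebra_simps)
  note m = om_moments[OF s]
  have i1: "integrable ?M ?T1" by (simp add: m)
  have i2: "integrable ?M ?T2" by (simp add: m)
  have i3: "integrable ?M ?T3" by (simp add: m)
  show "integrable ?M (\<lambda>\<omega>. ((\<Sum>a\<in>UNIV. p a * fst \<omega> a) + (\<Sum>j\<in>UNIV. q j * snd \<omega> j))\<^sup>2)"
    unfolding eq by (rule Bochner_Integration.integrable_add[OF Bochner_Integration.integrable_add[OF i1 i2] i3])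
  have v1: "integral\<^sup>L ?M ?T1 = (\<Sum>a\<in>UNIV. (p a)\<^sup>2)"
  proof -
    have "integral\<^sup>L ?M ?T1 = (\<Sum>a\<in>UNIV. \<Sum>b\<in>UNIV. (p a * p b) * (if a = b then 1 else 0))"
      by (simp add: integral_sum integrable_sum integrable_mult_right m del: mult_1_right mult_zero_right)
    also have "\<dots> = (\<Sum>a\<in>UNIV. (p a)\<^sup>2)"
      by (simp add: power2_eq_square if_distrib sum.delta cong: if_cong)
    finally show ?thesis .
  qed
  have v2: "integral\<^sup>L ?M ?T2 = 0"
    by (simp add: integral_sum integrable_sum integrable_mult_right m)
  have v3: "integral\<^sup>L ?M ?T3 = s2 * (\<Sum>j\<in>UNIV. (q j)\<^sup>2)"
  proof -
    have "integral\<^sup>L ?M ?T3 = (\<Sum>i\<in>UNIV. \<Sum>j\<in>UNIV. (q i * q j) * (if i = j then s2 else 0))"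
      by (simp add: integral_sum integrable_sum integrable_mult_right m del: mult_zero_right)
    also have "\<dots> = s2 * (\<Sum>j\<in>UNIV. (q j)\<^sup>2)"
      by (simp add: power2_eq_square if_distrib sum.delta sum_distrib_left mult_ac cong: if_cong)
    finally show ?thesis .
  qed
  show "integral\<^sup>L ?M (\<lambda>\<omega>. ((\<Sum>a\<in>UNIV. p a * fst \<omega> a) + (\<Sum>j\<in>UNIV. q j * snd \<omega> j))\<^sup>2)
       = (\<Sum>a\<in>UNIV. (p a)\<^sup>2) + s2 * (\<Sum>j\<in>UNIV. (q j)\<^sup>2)"
    unfolding eq using i1 i2 i3 v1 v2 v3 by simp
qed


lemma gv_meas[measurable]: "(\<lambda>x. x a) \<in> borel_measurable (gauss_vec \<sigma> :: ('k::finite \<Rightarrow> real) measure)"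
  unfolding gauss_vec_def
  using measurable_component_singleton[of a UNIV "\<lambda>_. N1 \<sigma>"]
  by (simp add: measurable_cong_sets[OF refl sets_density] cong: measurable_cong_sets)

definition hmap :: "real^'d::finite^'n::finite \<Rightarrow> ('d \<Rightarrow> real) \<times> ('n \<Rightarrow> real) \<Rightarrow> real^'n" where
  "hmap U = (\<lambda>(c, z). U *v (\<chi> i. c i) + (\<chi> i. z i))"

lemma hmap_comp: "hmap U \<omega> $ i = (\<Sum>a\<in>UNIV. U$i$a * fst \<omega> a) + snd \<omega> i"
  by (cases \<omega>) (simp add: hmap_def matrix_vector_mult_def)

lemma hmap_meas: "hmap U \<in> borel_measurable (Om s2 :: (('d::finite \<Rightarrow> real) \<times> ('n::finite \<Rightarrow> real)) measure)"
proof (subst borel_measurable_euclidean_space, intro ballI)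
  fix b :: "real^'n" assume "b \<in> Basis"
  then obtain i where b: "b = axis i 1" by (auto simp: Basis_vec_def)
  have "(\<lambda>\<omega>. hmap U \<omega> \<bullet> b) = (\<lambda>\<omega>. (\<Sum>a\<in>UNIV. U$i$a * fst \<omega> a) + snd \<omega> i)"
    by (simp add: b inner_axis hmap_comp)
  also have "\<dots> \<in> borel_measurable (Om s2 :: (('d::finite \<Rightarrow> real) \<times> ('n::finite \<Rightarrow> real)) measure)"
    by measurable
  finally show "(\<lambda>\<omega>. hmap U \<omega> \<bullet> b) \<in> borel_measurable (Om s2 :: (('d::finite \<Rightarrow> real) \<times> ('n::finite \<Rightarrow> real)) measure)" .
qed

lemma f_meas: "(\<lambda>y. (norm (M *v y))\<^sup>2) \<in> borel_measurable (borel :: (real^'n::finite) measure)"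
  by (intro borel_measurable_continuous_onI continuous_intros)

lemma Q_eq: "Q_dist U s2 = distr (Om s2) borel (hmap U)"
  unfolding Q_dist_def hmap_def ..


lemma norm_sq_vec: "(norm (v::real^'n::finite))\<^sup>2 = (\<Sum>k\<in>UNIV. (v$k)\<^sup>2)"
  unfolding power2_norm_eq_inner inner_vec_def by (simp add: power2_eq_square)

lemma Mh_comp: "(M *v hmap U \<omega>)$k = (\<Sum>a\<in>UNIV. (M**U)$k$a * fst \<omega> a) + (\<Sum>j\<in>UNIV. M$k$j * snd \<omega> j)"
proof -
  have "(M *v hmap U \<omega>)$k = (\<Sum>j\<in>UNIV. M$k$j * ((\<Sum>a\<in>UNIV. U$j$a * fst \<omega> a) + snd \<omega> j))"
    by (simp add: matrix_vector_mult_def hmap_comp)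
  also have "\<dots> = (\<Sum>j\<in>UNIV. \<Sum>a\<in>UNIV. M$k$j * U$j$a * fst \<omega> a) + (\<Sum>j\<in>UNIV. M$k$j * snd \<omega> j)"
    by (simp add: distrib_left sum.distrib sum_distrib_left mult_ac)
  also have "(\<Sum>j\<in>UNIV. \<Sum>a\<in>UNIV. M$k$j * U$j$a * fst \<omega> a) = (\<Sum>a\<in>UNIV. (M**U)$k$a * fst \<omega> a)"
    by (subst sum.swap) (simp add: matrix_matrix_mult_def sum_distrib_right)
  finally show ?thesis .
qed

lemma EM:
  fixes U :: "real^'d::finite^'n::finite" and M :: "real^'n^'n"
  assumes s: "s2 > 0"
  shows "integrable (Q_dist U s2) (\<lambda>y. (norm (M *v y))\<^sup>2)"
    "integral\<^sup>L (Q_dist U s2) (\<lambda>y. (norm (M *v y))\<^sup>2)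
       = (\<Sum>k\<in>UNIV. \<Sum>a\<in>UNIV. ((M**U)$k$a)\<^sup>2) + s2 * (\<Sum>k\<in>UNIV. \<Sum>j\<in>UNIV. (M$k$j)\<^sup>2)"
proof -
  let ?M = "Om s2 :: (('d \<Rightarrow> real) \<times> ('n \<Rightarrow> real)) measure"
  let ?G = "\<lambda>k \<omega>. ((\<Sum>a\<in>UNIV. (M**U)$k$a * fst \<omega> a) + (\<Sum>j\<in>UNIV. M$k$j * snd \<omega> j))\<^sup>2"
  have pw: "(norm (M *v hmap U \<omega>))\<^sup>2 = (\<Sum>k\<in>UNIV. ?G k \<omega>)" for \<omega>
    by (simp add: norm_sq_vec Mh_comp)
  note hm = hmap_meas[of U s2] and fm = f_meas[of M]
  have iG: "integrable ?M (?G k)" for k by (rule core(1)[OF s])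
  have "integrable (Q_dist U s2) (\<lambda>y. (norm (M *v y))\<^sup>2) \<longleftrightarrow> integrable ?M (\<lambda>\<omega>. (norm (M *v hmap U \<omega>))\<^sup>2)"
    unfolding Q_eq by (rule integrable_distr_eq[OF hm fm])
  also have "\<dots>" unfolding pw using iG by simp
  finally show "integrable (Q_dist U s2) (\<lambda>y. (norm (M *v y))\<^sup>2)" .
  have "integral\<^sup>L (Q_dist U s2) (\<lambda>y. (norm (M *v y))\<^sup>2) = integral\<^sup>L ?M (\<lambda>\<omega>. (norm (M *v hmap U \<omega>))\<^sup>2)"
    unfolding Q_eq by (rule integral_distr[OF hm fm])
  also have "\<dots> = (\<Sum>k\<in>UNIV. integral\<^sup>L ?M (?G k))"
    unfolding pw by (rule Bochner_Integration.integral_sum) (rule iG)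
  also have "\<dots> = (\<Sum>k\<in>UNIV. (\<Sum>a\<in>UNIV. ((M**U)$k$a)\<^sup>2) + s2 * (\<Sum>j\<in>UNIV. (M$k$j)\<^sup>2))"
    by (rule sum.cong[OF refl]) (rule core(2)[OF s])
  also have "\<dots> = (\<Sum>k\<in>UNIV. \<Sum>a\<in>UNIV. ((M**U)$k$a)\<^sup>2) + s2 * (\<Sum>k\<in>UNIV. \<Sum>j\<in>UNIV. (M$k$j)\<^sup>2)"
    by (simp add: sum.distrib sum_distrib_left)
  finally show "integral\<^sup>L (Q_dist U s2) (\<lambda>y. (norm (M *v y))\<^sup>2)
       = (\<Sum>k\<in>UNIV. \<Sum>a\<in>UNIV. ((M**U)$k$a)\<^sup>2) + s2 * (\<Sum>k\<in>UNIV. \<Sum>j\<in>UNIV. (M$k$j)\<^sup>2)" .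
qed


lemma orth_entry:
  fixes U :: "real^'d::finite^'n::finite"
  assumes "transpose U ** U = mat 1"
  shows "(\<Sum>k\<in>UNIV. U$k$a * U$k$b) = (if a = b then 1 else 0)"
proof -
  have "(transpose U ** U)$a$b = (mat 1 :: real^'d^'d)$a$b" using assms by simp
  then show ?thesis by (simp add: matrix_matrix_mult_def transpose_def mat_def)
qed

lemma sumU:
  fixes U :: "real^'d::finite^'n::finite"
  assumes "transpose U ** U = mat 1"
  shows "(\<Sum>k\<in>UNIV. \<Sum>a\<in>UNIV. (U$k$a)\<^sup>2) = real CARD('d)"
proof -
  have "(\<Sum>k\<in>UNIV. \<Sum>a\<in>UNIV. (U$k$a)\<^sup>2) = (\<Sum>a\<in>UNIV. \<Sum>k\<in>UNIV. U$k$a * U$k$a)"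
    by (subst sum.swap) (simp add: power2_eq_square)
  also have "\<dots> = (\<Sum>a\<in>(UNIV::'d set). 1)" using orth_entry[OF assms] by simp
  finally show ?thesis by simp
qed

lemma PU:
  fixes U :: "real^'d::finite^'n::finite"
  assumes "transpose U ** U = mat 1"
  shows "(U ** transpose U) ** U = U" "(U ** transpose U) ** (U ** transpose U) = U ** transpose U"
proof -
  show 1: "(U ** transpose U) ** U = U"
    by (metis assms matrix_mul_assoc matrix_mul_rid)
  show "(U ** transpose U) ** (U ** transpose U) = U ** transpose U"
    by (metis 1 matrix_mul_assoc)
qed

lemma mm_entry: "(A ** B)$k$j = (\<Sum>i\<in>UNIV. A$k$i * B$i$j)"
  by (simp add: matrix_matrix_mult_def)

lemma gen_entry:
  fixes A :: "real^'n::finite^'n" and B :: "real^'d::finite^'n"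
  shows "((mat 1 - \<beta> *\<^sub>R A) ** B)$k$a = B$k$a - \<beta> * (A ** B)$k$a"
proof -
  have "((mat 1 - \<beta> *\<^sub>R A) ** B)$k$a = (\<Sum>i\<in>UNIV. (if k = i then B$i$a else 0) - \<beta> * (A$k$i * B$i$a))"
    unfolding mm_entry by (intro sum.cong) (auto simp: mat_def algebra_simps)
  also have "\<dots> = B$k$a - \<beta> * (A ** B)$k$a"
    unfolding mm_entry by (simp add: sum_subtractf sum_distrib_left)
  finally show ?thesis .
qed

lemma MU_entry:
  fixes U :: "real^'d::finite^'n::finite"
  assumes "transpose U ** U = mat 1"
  shows "((mat 1 - \<beta> *\<^sub>R (U ** transpose U)) ** U)$k$a = (1 - \<beta>) * U$k$a"
  using gen_entry[of \<beta> "U ** transpose U" U k a] PU(1)[OF assms] by (simp add: algebra_simps)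

lemma frob:
  fixes U :: "real^'d::finite^'n::finite"
  assumes o: "transpose U ** U = mat 1"
  shows "(\<Sum>k\<in>UNIV. \<Sum>j\<in>UNIV. ((mat 1 - \<beta> *\<^sub>R (U ** transpose U))$k$j)\<^sup>2)
     = real CARD('n) - 2 * \<beta> * real CARD('d) + \<beta>\<^sup>2 * real CARD('d)"
proof -
  let ?P = "U ** transpose U"
  have Pe: "?P$k$j = (\<Sum>a\<in>UNIV. U$k$a * U$j$a)" for k j
    by (simp add: matrix_matrix_mult_def transpose_def)
  have Psym: "?P$j$k = ?P$k$j" for k j by (simp add: Pe mult.commute)
  have diag: "(\<Sum>k\<in>UNIV. ?P$k$k) = real CARD('d)"
    using sumU[OF o] by (simp add: Pe power2_eq_square)
  have sq: "(\<Sum>j\<in>UNIV. (?P$k$j)\<^sup>2) = ?P$k$k" for k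
  proof -
    have "(\<Sum>j\<in>UNIV. (?P$k$j)\<^sup>2) = (?P ** ?P)$k$k"
      unfolding mm_entry[of ?P ?P] by (simp add: power2_eq_square Psym)
    then show ?thesis using PU(2)[OF o] by simp
  qed
  have pw: "((mat 1 - \<beta> *\<^sub>R ?P)$k$j)\<^sup>2 = (if k = j then 1 else 0) - 2 * \<beta> * (if k = j then ?P$k$j else 0) + \<beta>\<^sup>2 * (?P$k$j)\<^sup>2" for k j
    by (simp add: mat_def power2_eq_square algebra_simps)
  have "(\<Sum>k\<in>UNIV. \<Sum>j\<in>UNIV. ((mat 1 - \<beta> *\<^sub>R ?P)$k$j)\<^sup>2)
      = (\<Sum>k\<in>UNIV. 1 - 2 * \<beta> * ?P$k$k + \<beta>\<^sup>2 * ?P$k$k)"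
    unfolding pw by (simp add: sum.distrib sum_subtractf sum_distrib_left[symmetric] sq)
  also have "\<dots> = real CARD('n) - 2 * \<beta> * real CARD('d) + \<beta>\<^sup>2 * real CARD('d)"
    by (simp add: sum.distrib sum_subtractf sum_distrib_left[symmetric] diag)
  finally show ?thesis .
qed


lemma EMb:
  fixes U :: "real^'d::finite^'n::finite"
  assumes s: "s2 > 0" and o: "transpose U ** U = mat 1"
  shows "integrable (Q_dist U s2) (\<lambda>y. (norm ((mat 1 - \<beta> *\<^sub>R (U ** transpose U)) *v y))\<^sup>2)"
    "integral\<^sup>L (Q_dist U s2) (\<lambda>y. (norm ((mat 1 - \<beta> *\<^sub>R (U ** transpose U)) *v y))\<^sup>2)
      = (1 - \<beta>)\<^sup>2 * real CARD('d) + s2 * (real CARD('n) - 2 * \<beta> * real CARD('d) + \<beta>\<^sup>2 * real CARD('d))"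
proof -
  show "integrable (Q_dist U s2) (\<lambda>y. (norm ((mat 1 - \<beta> *\<^sub>R (U ** transpose U)) *v y))\<^sup>2)"
    by (rule EM(1)[OF s])
  have "(\<Sum>k\<in>UNIV. \<Sum>a\<in>UNIV. (((mat 1 - \<beta> *\<^sub>R (U ** transpose U)) ** U)$k$a)\<^sup>2) = (1 - \<beta>)\<^sup>2 * real CARD('d)"
    using sumU[OF o] by (simp add: MU_entry[OF o] power_mult_distrib sum_distrib_left[symmetric])
  then show "integral\<^sup>L (Q_dist U s2) (\<lambda>y. (norm ((mat 1 - \<beta> *\<^sub>R (U ** transpose U)) *v y))\<^sup>2)
      = (1 - \<beta>)\<^sup>2 * real CARD('d) + s2 * (real CARD('n) - 2 * \<beta> * real CARD('d) + \<beta>\<^sup>2 * real CARD('d))"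
    using EM(2)[OF s, where M="mat 1 - \<beta> *\<^sub>R (U ** transpose U)" and U=U] frob[OF o, of \<beta>] by simp
qed

lemma LSS_eq:
  fixes U :: "real^'d::finite^'n::finite"
  shows "L_SS \<alpha> U y = (norm ((mat 1 - \<alpha> *\<^sub>R (U ** transpose U)) *v y))\<^sup>2
     + (2 * \<alpha> * real CARD('d) / (real CARD('n) - real CARD('d))) * (norm ((mat 1 - 1 *\<^sub>R (U ** transpose U)) *v y))\<^sup>2"
  unfolding L_SS_def by (simp add: matrix_vector_mult_diff_rdistrib scaleR_matrix_vector_assoc)

lemma quad_ineq:
  fixes s2 d n \<alpha> :: real
  assumes "s2 > 0" "d \<ge> 0"
  shows "(1 - 1/(1+s2))\<^sup>2 * d + s2 * n + s2 * (1/(1+s2))\<^sup>2 * d \<le> (1 - \<alpha>)\<^sup>2 * d + s2 * n + s2 * \<alpha>\<^sup>2 * d"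
proof -
  define a0 where "a0 = 1/(1+s2)"
  have a0: "(1 + s2) * a0 = 1" using assms by (simp add: a0_def)
  have "((1 - \<alpha>)\<^sup>2 * d + s2 * n + s2 * \<alpha>\<^sup>2 * d) - ((1 - a0)\<^sup>2 * d + s2 * n + s2 * a0\<^sup>2 * d)
      = d * (1 + s2) * (\<alpha> - a0)\<^sup>2"
  proof -
    have "((1 - \<alpha>)\<^sup>2 * d + s2 * n + s2 * \<alpha>\<^sup>2 * d) - ((1 - a0)\<^sup>2 * d + s2 * n + s2 * a0\<^sup>2 * d)
        = d * ((1 + s2) * \<alpha>\<^sup>2 - 2 * \<alpha> + 2 * a0 - (1 + s2) * a0 * a0)"
      by (simp add: power2_eq_square algebra_simps)
    also have "\<dots> = d * ((1 + s2) * \<alpha>\<^sup>2 - 2 * \<alpha> * ((1 + s2) * a0) + (1 + s2) * a0 * a0)"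
      using a0 by (simp add: algebra_simps)
    also have "\<dots> = d * (1 + s2) * (\<alpha> - a0)\<^sup>2"
      by (simp add: power2_eq_square algebra_simps)
    finally show ?thesis .
  qed
  moreover have "d * (1 + s2) * (\<alpha> - a0)\<^sup>2 \<ge> 0" using assms by simp
  ultimately show ?thesis unfolding a0_def by linarith
qed


theorem mainTheorem2:
  fixes U :: "real^'d::finite^'n::finite" and s2 :: real
  assumes "CARD('d) < CARD('n)"
    and "transpose U ** U = mat 1"
    and "s2 > 0"
  shows "(\<forall>\<alpha>\<in>{0..1}. integrable (Q_dist U s2) (L_SS \<alpha> U))
       \<and> (\<forall>\<alpha>\<in>{0..1}. (\<integral>y. L_SS (1 / (1 + s2)) U y \<partial>Q_dist U s2)
                        \<le> (\<integral>y. L_SS \<alpha> U y \<partial>Q_dist U s2))"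
proof -
  note s = assms(3) and o = assms(2)
  have nd: "real CARD('n) - real CARD('d) > 0" using assms(1) by simp
  have fe: "L_SS \<alpha> U = (\<lambda>y. (norm ((mat 1 - \<alpha> *\<^sub>R (U ** transpose U)) *v y))\<^sup>2
     + (2 * \<alpha> * real CARD('d) / (real CARD('n) - real CARD('d))) * (norm ((mat 1 - 1 *\<^sub>R (U ** transpose U)) *v y))\<^sup>2)" for \<alpha>
    by (rule ext) (rule LSS_eq)
  have int: "integrable (Q_dist U s2) (L_SS \<alpha> U)" for \<alpha>
    unfolding fe by (intro Bochner_Integration.integrable_add integrable_mult_right EMb(1)[OF s o])
  have val: "(\<integral>y. L_SS \<alpha> U y \<partial>Q_dist U s2) = (1 - \<alpha>)\<^sup>2 * real CARD('d) + s2 * real CARD('n) + s2 * \<alpha>\<^sup>2 * real CARD('d)" for \<alpha>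
  proof -
    have "(\<integral>y. L_SS \<alpha> U y \<partial>Q_dist U s2) =
       ((1 - \<alpha>)\<^sup>2 * real CARD('d) + s2 * (real CARD('n) - 2 * \<alpha> * real CARD('d) + \<alpha>\<^sup>2 * real CARD('d)))
       + (2 * \<alpha> * real CARD('d) / (real CARD('n) - real CARD('d))) *
         ((1 - 1)\<^sup>2 * real CARD('d) + s2 * (real CARD('n) - 2 * 1 * real CARD('d) + 1\<^sup>2 * real CARD('d)))"
      unfolding fe
      by (simp only: Bochner_Integration.integral_add[OF EMb(1)[OF s o, of \<alpha>] integrable_mult_right[OF EMb(1)[OF s o, of 1]]]
            integral_mult_right_zero EMb(2)[OF s o])
    also have "\<dots> = (1 - \<alpha>)\<^sup>2 * real CARD('d) + s2 * real CARD('n) + s2 * \<alpha>\<^sup>2 * real CARD('d)"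
      using nd by (simp add: field_simps power2_eq_square)
    finally show ?thesis .
  qed
  show ?thesis
    using int quad_ineq[OF s, of "real CARD('d)" "real CARD('n)"] by (simp add: val)
qed

end
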